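(* For every $n\ge1$, $$u_{2n}(a)\,a^{2n}=\sum_{k=0}^\infty(-1)^k\frac{A_k[n]}{a^{2k}},$$ where the series converges absolutely for $|a|>n$.
   Context: The rational functions $u_{2n}(a)$: $(a^2+1)u_2=1$ and for $n\ge2$: $(a^2+n^2)u_{2n}=3u_{2(n-1)}+3\sum_{j_1+j_2=n-1}u_{2j_1}u_{2j_2}+\sum_{j_1+j_2+j_3=n-1}u_{2j_1}u_{2j_2}u_{2j_3}-\sum_{1\le j_1,\,2j_1<n}(n-2j_1)^2u_{2j_1}u_{2(n-j_1)}$, all indices $j_i\ge1$. $A_0(z)$ is the unique function holomorphic near $0$ with $A_0(0)=0$ and $z(1+A_0)^3=A_0$; $(A_k)_{k\ge0}$ is the unique sequence of functions holomorphic in $|z|<4/27$ such that $\sum_kA_k(z)a^{-2k}$ formally solves $a^2(z(1+A)^3-A)=(1+A)\delta_z^2A-(\delta_zA)^2$, $\delta_z=z\,d/dz$. The numbers $A_k[n]$ are defined by $A_k(z)=(-1)^k\sum_{n\ge1}A_k[n]z^n$. *)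

theory Defs
  imports "HOL-Analysis.Analysis"
begin

text \<open>The rational functions u_{2n}(a), indexed here by n (so u n a = u_{2n}(a)).
  The value at n = 0 is never used (all indices in the recursion are at least 1).\<close>
function u :: "nat \<Rightarrow> complex \<Rightarrow> complex" where
  "u 0 a = 0"
| "u (Suc 0) a = 1 / (a^2 + 1)"
| "u (Suc (Suc m)) a =
     (let n = Suc (Suc m) in
      (3 * u (n - 1) a
       + 3 * (\<Sum>(j1, j2) \<in> {(j1, j2). 1 \<le> j1 \<and> 1 \<le> j2 \<and> j1 + j2 = n - 1}. u j1 a * u j2 a)
       + (\<Sum>(j1, j2, j3) \<in> {(j1, j2, j3). 1 \<le> j1 \<and> 1 \<le> j2 \<and> 1 \<le> j3 \<and> j1 + j2 + j3 = n - 1}.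
            u j1 a * u j2 a * u j3 a)
       - (\<Sum>j1 \<in> {j1. 1 \<le> j1 \<and> 2 * j1 < n}. (of_nat (n - 2 * j1))^2 * u j1 a * u (n - j1) a))
      / (a^2 + (of_nat n)^2))"
  by pat_completeness auto
termination
  by (relation "Wellfounded.measure fst") (auto simp: Let_def)

definition delta :: "(complex \<Rightarrow> complex) \<Rightarrow> complex \<Rightarrow> complex" where
  "delta f z = z * deriv f z"

text \<open>B k = coefficient of a^{-2k} in 1 + A, i.e. 1 + A_0 for k = 0 and A_k otherwise.\<close>
definition Bcoef :: "(nat \<Rightarrow> complex \<Rightarrow> complex) \<Rightarrow> nat \<Rightarrow> complex \<Rightarrow> complex" where
  "Bcoef A k z = (if k = 0 then 1 + A 0 z else A k z)"

text \<open>The sequence A satisfies, coefficientwise in a^{-2}, the equation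
  a^2 (z(1+A)^3 - A) = (1+A) delta^2 A - (delta A)^2 with A = sum_k A_k a^{-2k}:
  the coefficient of a^{2} gives z(1+A_0)^3 = A_0, and the coefficient of a^{-2(k-1)}, k \<ge> 1, gives
  z [(1+A)^3]_k - A_k = [(1+A) delta^2 A]_{k-1} - [(delta A)^2]_{k-1}.\<close>
definition formal_solution :: "(nat \<Rightarrow> complex \<Rightarrow> complex) \<Rightarrow> complex \<Rightarrow> bool" where
  "formal_solution A z \<longleftrightarrow>
     z * (1 + A 0 z)^3 = A 0 z \<and>
     (\<forall>k\<ge>1.
        z * (\<Sum>i\<le>k. \<Sum>j\<le>k - i. Bcoef A i z * Bcoef A j z * Bcoef A (k - i - j) z) - A k z
        = (\<Sum>i\<le>k - 1. Bcoef A i z * delta (delta (A (k - 1 - i))) z)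
          - (\<Sum>i\<le>k - 1. delta (A i) z * delta (A (k - 1 - i)) z))"

text \<open>A_k[n], defined by A_k(z) = (-1)^k sum_{n\<ge>1} A_k[n] z^n.\<close>
definition Acoef :: "(nat \<Rightarrow> complex \<Rightarrow> complex) \<Rightarrow> nat \<Rightarrow> nat \<Rightarrow> complex" where
  "Acoef A k n = (-1)^k * ((deriv ^^ n) (A k) 0 / fact n)"

end

theory Submission
  imports Defs "HOL-Complex_Analysis.Complex_Analysis"
begin

definition Dop :: "'a::comm_semiring_1 fps \<Rightarrow> 'a fps" where
  "Dop F = Abs_fps (\<lambda>n. of_nat n * F $ n)"

lemma Dop_nth [simp]: "Dop F $ n = of_nat n * F $ n"
  by (simp add: Dop_def)

lemma Dop_X: "fps_X * fps_deriv F = Dop (F :: 'a::comm_ring_1 fps)"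
  by (rule fps_ext) (auto simp: Dop_def)

lemma has_delta:
  assumes "f has_fps_expansion F"
  shows "delta f has_fps_expansion Dop F"
proof -
  have "delta f = (\<lambda>z. z * deriv f z)" by (rule ext) (simp add: delta_def)
  moreover have "(\<lambda>z. z * deriv f z) has_fps_expansion fps_X * fps_deriv F"
    by (intro has_fps_expansion_mult has_fps_expansion_fps_X has_fps_expansion_deriv assms)
  ultimately show ?thesis by (simp add: Dop_X)
qed

definition conv :: "(nat \<Rightarrow> 'a::comm_ring_1) \<Rightarrow> (nat \<Rightarrow> 'a) \<Rightarrow> nat \<Rightarrow> 'a" where
  "conv f g k = (\<Sum>i\<le>k. f i * g (k - i))"

definition BF :: "(nat \<Rightarrow> complex fps) \<Rightarrow> nat \<Rightarrow> complex fps" where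
  "BF F i = (if i = 0 then 1 + F 0 else F i)"

lemma analytic_part:
  fixes A :: "nat \<Rightarrow> complex \<Rightarrow> complex"
  assumes holo: "\<And>k. A k holomorphic_on ball 0 (4/27)"
    and formal: "\<And>z. z \<in> ball 0 (4/27) \<Longrightarrow> formal_solution A z"
  defines "F \<equiv> (\<lambda>k. fps_expansion (A k) 0)"
  shows "fps_X * conv (BF F) (conv (BF F) (BF F)) k - F k =
         (if k = 0 then 0 else conv (BF F) (\<lambda>j. Dop (Dop (F j))) (k - 1) - conv (\<lambda>j. Dop (F j)) (\<lambda>j. Dop (F j)) (k - 1))"
proof -
  have hasF: "A j has_fps_expansion F j" for j
    unfolding F_def by (rule has_fps_expansion_fps_expansion[OF _ _ holo]) auto
  have hasB: "Bcoef A j has_fps_expansion BF F j" for j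
  proof (cases "j = 0")
    case True
    have "(\<lambda>z. 1 + A 0 z) has_fps_expansion 1 + F 0"
      by (intro has_fps_expansion_add has_fps_expansion_1 hasF)
    moreover have "Bcoef A j = (\<lambda>z. 1 + A 0 z)" using True by (auto simp: Bcoef_def)
    ultimately show ?thesis using True by (simp add: BF_def)
  next
    case False
    have "Bcoef A j = A j" using False by (auto simp: Bcoef_def)
    then show ?thesis using False hasF by (simp add: BF_def)
  qed
  have ev: "eventually (\<lambda>z. z \<in> ball 0 (4/27)) (nhds (0::complex))"
    by (intro eventually_nhds_in_open) auto
  show ?thesis
  proof (cases "k = 0")
    case True
    have e1: "(\<lambda>z. z * (1 + A 0 z)^3 - A 0 z) has_fps_expansion fps_X * (1 + F 0)^3 - F 0"
      by (intro has_fps_expansion_diff has_fps_expansion_mult has_fps_expansion_fps_X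
            has_fps_expansion_power has_fps_expansion_add has_fps_expansion_1 hasF)
    have "eventually (\<lambda>z. z * (1 + A 0 z)^3 - A 0 z = 0) (nhds 0)"
      using ev by eventually_elim (use formal in \<open>auto simp: formal_solution_def\<close>)
    then have "(\<lambda>z. z * (1 + A 0 z)^3 - A 0 z) has_fps_expansion 0"
      by (simp add: has_fps_expansion_0_iff)
    with e1 have "fps_X * (1 + F 0)^3 - F 0 = 0"
      using fps_expansion_unique_complex by blast
    then show ?thesis using True
      by (simp add: conv_def BF_def power3_eq_cube mult.assoc)
  next
    case False
    define L where "L = (\<lambda>z. z * (\<Sum>i\<le>k. \<Sum>j\<le>k - i. Bcoef A i z * Bcoef A j z * Bcoef A (k - i - j) z) - A k z)"
    define R where "R = (\<lambda>z. (\<Sum>i\<le>k - 1. Bcoef A i z * delta (delta (A (k - 1 - i))) z)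
          - (\<Sum>i\<le>k - 1. delta (A i) z * delta (A (k - 1 - i)) z))"
    have hL: "L has_fps_expansion fps_X * (\<Sum>i\<le>k. \<Sum>j\<le>k - i. BF F i * BF F j * BF F (k - i - j)) - F k"
      unfolding L_def
      by (intro has_fps_expansion_diff has_fps_expansion_mult has_fps_expansion_fps_X
            has_fps_expansion_sum hasF hasB)
    have hR: "R has_fps_expansion (\<Sum>i\<le>k - 1. BF F i * Dop (Dop (F (k - 1 - i))))
          - (\<Sum>i\<le>k - 1. Dop (F i) * Dop (F (k - 1 - i)))"
      unfolding R_def
      by (intro has_fps_expansion_diff has_fps_expansion_mult
            has_fps_expansion_sum hasF hasB has_delta)
    have "eventually (\<lambda>z. L z = R z) (nhds 0)"
      using ev by eventually_elim (use formal False in \<open>auto simp: formal_solution_def L_def R_def\<close>)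
    then have "R has_fps_expansion fps_X * (\<Sum>i\<le>k. \<Sum>j\<le>k - i. BF F i * BF F j * BF F (k - i - j)) - F k"
      using hL has_fps_expansion_cong by blast
    with hR have eq: "fps_X * (\<Sum>i\<le>k. \<Sum>j\<le>k - i. BF F i * BF F j * BF F (k - i - j)) - F k
        = (\<Sum>i\<le>k - 1. BF F i * Dop (Dop (F (k - 1 - i))))
          - (\<Sum>i\<le>k - 1. Dop (F i) * Dop (F (k - 1 - i)))"
      using fps_expansion_unique_complex by blast
    have "conv (BF F) (conv (BF F) (BF F)) k = (\<Sum>i\<le>k. \<Sum>j\<le>k - i. BF F i * BF F j * BF F (k - i - j))"
      by (simp add: conv_def sum_distrib_left mult.assoc diff_diff_add)
    with eq False show ?thesis by (simp add: conv_def)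
  qed
qed


definition Tr :: "(nat \<Rightarrow> 'a::comm_ring_1 fps) \<Rightarrow> 'a fps fps" where
  "Tr f = Abs_fps (\<lambda>n. Abs_fps (\<lambda>k. f k $ n))"

lemma Tr_nth [simp]: "Tr f $ n $ k = f k $ n"
  by (simp add: Tr_def)

lemma Tr_conv: "Tr (conv f g) = Tr f * Tr g"
proof (intro fps_ext)
  fix n k
  have "Tr (conv f g) $ n $ k = (\<Sum>i\<le>k. \<Sum>j=0..n. f i $ j * g (k - i) $ (n - j))"
    by (simp add: conv_def fps_sum_nth fps_mult_nth)
  also have "\<dots> = (\<Sum>j=0..n. \<Sum>i\<le>k. f i $ j * g (k - i) $ (n - j))"
    by (rule sum.swap)
  also have "\<dots> = (Tr f * Tr g) $ n $ k"
    by (simp add: fps_sum_nth fps_mult_nth atLeast0AtMost)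
  finally show "Tr (conv f g) $ n $ k = (Tr f * Tr g) $ n $ k" .
qed

lemma Tr_diff: "Tr (\<lambda>k. f k - g k) = Tr f - Tr g"
  by (intro fps_ext) simp

lemma Tr_Xmult: "Tr (\<lambda>k. fps_X * f k) = fps_X * Tr f"
  by (intro fps_ext) simp

lemma of_nat_fps_nth: "(of_nat m * (G :: 'a::comm_ring_1 fps)) $ k = of_nat m * G $ k"
  by (simp add: fps_of_nat[symmetric])

lemma Tr_Dop: "Tr (\<lambda>k. Dop (f k)) = Dop (Tr f)"
  by (intro fps_ext) (simp add: of_nat_fps_nth)

lemma Tr_shift: "Tr (\<lambda>k. if k = 0 then 0 else f (k - 1)) = fps_const fps_X * Tr f"
  by (intro fps_ext) simp

lemma Tr_BF: "Tr (BF F) = 1 + Tr F"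
  by (intro fps_ext) (auto simp: BF_def)

lemma bivariate_eq:
  fixes A :: "nat \<Rightarrow> complex \<Rightarrow> complex"
  assumes holo: "\<And>k. A k holomorphic_on ball 0 (4/27)"
    and formal: "\<And>z. z \<in> ball 0 (4/27) \<Longrightarrow> formal_solution A z"
  defines "P \<equiv> Tr (\<lambda>k. fps_expansion (A k) 0)"
  shows "fps_X * ((1 + P) * ((1 + P) * (1 + P))) - P =
         fps_const fps_X * ((1 + P) * Dop (Dop P) - Dop P * Dop P)"
proof -
  define F where "F = (\<lambda>k. fps_expansion (A k) 0)"
  have eq: "(\<lambda>k. fps_X * conv (BF F) (conv (BF F) (BF F)) k - F k) =
         (\<lambda>k. if k = 0 then 0 else (\<lambda>m. conv (BF F) (\<lambda>j. Dop (Dop (F j))) m - conv (\<lambda>j. Dop (F j)) (\<lambda>j. Dop (F j)) m) (k - 1))"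
    using analytic_part[OF holo formal] unfolding F_def by auto
  have "Tr (\<lambda>k. fps_X * conv (BF F) (conv (BF F) (BF F)) k - F k)
      = fps_X * ((1 + P) * ((1 + P) * (1 + P))) - P"
    by (simp add: Tr_diff Tr_Xmult Tr_conv Tr_BF P_def F_def)
  moreover have "Tr (\<lambda>k. if k = 0 then 0 else (\<lambda>m. conv (BF F) (\<lambda>j. Dop (Dop (F j))) m - conv (\<lambda>j. Dop (F j)) (\<lambda>j. Dop (F j)) m) (k - 1))
      = fps_const fps_X * ((1 + P) * Dop (Dop P) - Dop P * Dop P)"
    apply (subst Tr_shift)
    apply (subst Tr_diff)
    apply (simp add: Tr_conv Tr_BF P_def F_def flip: Tr_Dop)
    done
  ultimately show ?thesis using eq by metis
qed


lemma coeff0: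
  fixes P :: "complex fps fps"
  assumes E: "fps_X * ((1 + P) * ((1 + P) * (1 + P))) - P =
         fps_const fps_X * ((1 + P) * Dop (Dop P) - Dop P * Dop P)"
  shows "P $ 0 = 0"
proof -
  have "(fps_X * ((1 + P) * ((1 + P) * (1 + P))) - P) $ 0 =
         (fps_const fps_X * ((1 + P) * Dop (Dop P) - Dop P * Dop P)) $ 0"
    using E by simp
  then show ?thesis by (simp add: fps_mult_nth)
qed

lemma coeffn:
  fixes P :: "complex fps fps"
  assumes E: "fps_X * ((1 + P) * ((1 + P) * (1 + P))) - P =
         fps_const fps_X * ((1 + P) * Dop (Dop P) - Dop P * Dop P)"
    and n: "n = Suc m"
  shows "P $ n * (1 + of_nat (n^2) * fps_X) = ((1 + P) * ((1 + P) * (1 + P))) $ m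
     - fps_X * (\<Sum>i\<in>{1..m}. (of_nat ((n-i)^2) - of_nat (i*(n-i))) * (P $ i * P $ (n-i)))"
proof -
  have P0: "P $ 0 = 0" using coeff0[OF E] .
  have h: "(fps_X * ((1 + P) * ((1 + P) * (1 + P))) - P) $ n =
         (fps_const fps_X * ((1 + P) * Dop (Dop P) - Dop P * Dop P)) $ n"
    using E by simp
  have split: "(\<Sum>i=0..n. g i) = g 0 + (\<Sum>i\<in>{1..m}. g i) + g n" for g :: "nat \<Rightarrow> complex fps"
    by (simp add: n sum.atLeast_Suc_atMost sum.cl_ivl_Suc)
  have s1: "((1 + P) * Dop (Dop P)) $ n = of_nat (n^2) * P $ n
      + (\<Sum>i\<in>{1..m}. of_nat ((n-i)^2) * (P $ i * P $ (n-i)))"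
  proof -
    have t0: "(1+P)$0 * Dop (Dop P) $ (n-0) = of_nat (n^2) * P$n"
      by (simp add: P0 power2_eq_square mult_ac)
    have tn: "(1+P)$n * Dop (Dop P) $ (n-n) = 0" by simp
    have tm: "(1+P)$i * Dop (Dop P) $ (n-i) = of_nat ((n-i)^2) * (P$i * P$(n-i))"
      if "i \<in> {1..m}" for i
      using that by (simp add: power2_eq_square mult_ac)
    have "(\<Sum>i\<in>{1..m}. (1+P)$i * Dop (Dop P) $ (n-i)) = (\<Sum>i\<in>{1..m}. of_nat ((n-i)^2) * (P$i * P$(n-i)))"
      by (rule sum.cong[OF refl tm])
    then show ?thesis unfolding fps_mult_nth split t0 tn by simp
  qed
  have s2: "(Dop P * Dop P) $ n = (\<Sum>i\<in>{1..m}. of_nat (i*(n-i)) * (P $ i * P $ (n-i)))"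
  proof -
    have tm: "Dop P $ i * Dop P $ (n-i) = of_nat (i*(n-i)) * (P$i * P$(n-i))" for i
      by (simp add: mult_ac)
    show ?thesis unfolding fps_mult_nth split tm by (simp add: P0)
  qed
  have "((1 + P) * ((1 + P) * (1 + P))) $ m - P $ n = fps_X * (of_nat (n^2) * P $ n
      + (\<Sum>i\<in>{1..m}. of_nat ((n-i)^2) * (P $ i * P $ (n-i)))
      - (\<Sum>i\<in>{1..m}. of_nat (i*(n-i)) * (P $ i * P $ (n-i))))"
    using h s1 s2 n by simp
  then show ?thesis
    by (simp add: algebra_simps sum_subtractf)
qed


lemma u_rec:
  assumes "n \<ge> 2"
  shows "u n a = (3 * u (n - 1) a
       + 3 * (\<Sum>(j1, j2) \<in> {(j1, j2). 1 \<le> j1 \<and> 1 \<le> j2 \<and> j1 + j2 = n - 1}. u j1 a * u j2 a)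
       + (\<Sum>(j1, j2, j3) \<in> {(j1, j2, j3). 1 \<le> j1 \<and> 1 \<le> j2 \<and> 1 \<le> j3 \<and> j1 + j2 + j3 = n - 1}.
            u j1 a * u j2 a * u j3 a)
       - (\<Sum>j1 \<in> {j1. 1 \<le> j1 \<and> 2 * j1 < n}. (of_nat (n - 2 * j1))^2 * u j1 a * u (n - j1) a))
      / (a^2 + (of_nat n)^2)"
proof -
  obtain k where k: "n = Suc (Suc k)" using assms by (metis add_2_eq_Suc le_Suc_ex)
  show ?thesis unfolding k by (simp only: u.simps Let_def)
qed

lemma pairs_sum:
  fixes x :: "nat \<Rightarrow> complex"
  assumes x0: "x 0 = 0"
  shows "(\<Sum>(j1, j2) \<in> {(j1, j2). 1 \<le> j1 \<and> 1 \<le> j2 \<and> j1 + j2 = m}. x j1 * x j2)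
       = (\<Sum>i=0..m. x i * x (m - i))"
proof -
  have "(\<Sum>i=0..m. x i * x (m - i)) = (\<Sum>i\<in>{1..<m}. x i * x (m - i))"
    by (rule sum.mono_neutral_cong_right) (auto simp: x0 Suc_le_eq)
  also have "\<dots> = (\<Sum>(j1, j2) \<in> {(j1, j2). 1 \<le> j1 \<and> 1 \<le> j2 \<and> j1 + j2 = m}. x j1 * x j2)"
    by (rule sum.reindex_bij_witness[of _ fst "\<lambda>i. (i, m - i)"]) auto
  finally show ?thesis by simp
qed

lemma triples_sum:
  fixes x :: "nat \<Rightarrow> complex"
  assumes x0: "x 0 = 0"
  shows "(\<Sum>(j1, j2, j3) \<in> {(j1, j2, j3). 1 \<le> j1 \<and> 1 \<le> j2 \<and> 1 \<le> j3 \<and> j1 + j2 + j3 = m}.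
            x j1 * x j2 * x j3)
       = (\<Sum>i=0..m. x i * (\<Sum>j=0..m-i. x j * x (m - i - j)))"
proof -
  have "(\<Sum>i=0..m. x i * (\<Sum>j=0..m-i. x j * x (m - i - j)))
      = (\<Sum>(i,j)\<in>Sigma {0..m} (\<lambda>i. {0..m-i}). x i * x j * x (m - i - j))"
    by (simp add: sum.Sigma[symmetric] sum_distrib_left mult.assoc)
  also have "\<dots> = (\<Sum>(i,j)\<in>{(i,j). 1 \<le> i \<and> 1 \<le> j \<and> i + j < m}. x i * x j * x (m - i - j))"
  proof (rule sum.mono_neutral_cong_right)
    show "\<forall>i\<in>Sigma {0..m} (\<lambda>i. {0..m - i}) - {(i, j). 1 \<le> i \<and> 1 \<le> j \<and> i + j < m}.
        (case i of (i, j) \<Rightarrow> x i * x j * x (m - i - j)) = 0"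
    proof
      fix p assume "p \<in> Sigma {0..m} (\<lambda>i. {0..m - i}) - {(i, j). 1 \<le> i \<and> 1 \<le> j \<and> i + j < m}"
      moreover obtain i j where p: "p = (i, j)" by (cases p)
      ultimately have "i \<le> m" "j \<le> m - i" "\<not> (1 \<le> i \<and> 1 \<le> j \<and> i + j < m)"
        by auto
      then have "i = 0 \<or> j = 0 \<or> m - i - j = 0" by auto
      then show "(case p of (i, j) \<Rightarrow> x i * x j * x (m - i - j)) = 0" using p x0 by auto
    qed
  qed auto
  also have "\<dots> = (\<Sum>(j1, j2, j3) \<in> {(j1, j2, j3). 1 \<le> j1 \<and> 1 \<le> j2 \<and> 1 \<le> j3 \<and> j1 + j2 + j3 = m}.
            x j1 * x j2 * x j3)"
    by (rule sum.reindex_bij_witness[of _ "\<lambda>(i,j,k). (i,j)" "\<lambda>(i,j). (i, j, m - i - j)"]) auto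
  finally show ?thesis by simp
qed


lemma sym_sum:
  fixes q :: "nat \<Rightarrow> complex"
  assumes n: "n = Suc m" and qs: "\<And>i. 1 \<le> i \<Longrightarrow> i \<le> m \<Longrightarrow> q (n - i) = q i"
  shows "(\<Sum>i\<in>{1..m}. (of_nat ((n-i)^2) - of_nat (i*(n-i))) * q i)
       = (\<Sum>j\<in>{j. 1 \<le> j \<and> 2 * j < n}. (of_nat (n - 2 * j))^2 * q j)"
proof -
  define f where "f i = (of_nat ((n-i)^2) - of_nat (i*(n-i))) * q i" for i
  define L where "L = {j. 1 \<le> j \<and> 2 * j < n}"
  define U where "U = {j. n < 2 * j \<and> j \<le> m}"
  have LI: "L \<subseteq> {1..m}" unfolding L_def n by auto
  have "(\<Sum>i\<in>{1..m}. f i) = (\<Sum>i\<in>{1..m} - L. f i) + (\<Sum>i\<in>L. f i)"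
    by (rule sum.subset_diff[OF LI]) simp
  also have "(\<Sum>i\<in>{1..m} - L. f i) = (\<Sum>i\<in>U. f i)"
  proof (rule sum.mono_neutral_cong_right)
    show "U \<subseteq> {1..m} - L" unfolding U_def L_def n by auto
    show "\<forall>i\<in>{1..m} - L - U. f i = 0"
    proof
      fix i assume "i \<in> {1..m} - L - U"
      then have "2 * i = n" unfolding U_def L_def n by auto
      then have "n - i = i" by auto
      then show "f i = 0" unfolding f_def by (simp add: power2_eq_square)
    qed
  qed auto
  also have "(\<Sum>i\<in>U. f i) = (\<Sum>j\<in>L. f (n - j))"
    by (rule sum.reindex_bij_witness[of _ "\<lambda>j. n - j" "\<lambda>j. n - j"]) (auto simp: U_def L_def n)
  finally have "(\<Sum>i\<in>{1..m}. f i) = (\<Sum>j\<in>L. f j + f (n - j))"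
    by (simp add: sum.distrib)
  also have "\<dots> = (\<Sum>j\<in>L. (of_nat (n - 2 * j))^2 * q j)"
  proof (rule sum.cong[OF refl])
    fix j assume j: "j \<in> L"
    then have j1: "1 \<le> j" "j \<le> m" "2 * j < n" unfolding L_def n by auto
    have nj: "n - (n - j) = j" using j1 by auto
    have "f j + f (n - j) = ((of_nat (n - j))^2 - of_nat j * of_nat (n - j)
           + (of_nat j)^2 - of_nat (n - j) * of_nat j) * q j"
      unfolding f_def nj qs[OF j1(1,2)] by (simp only: of_nat_mult of_nat_power) (simp add: algebra_simps)
    also have "\<dots> = (of_nat (n - 2 * j))^2 * q j"
      using j1 by (simp add: of_nat_diff power2_eq_square algebra_simps)
    finally show "f j + f (n - j) = (of_nat (n - 2 * j))^2 * q j" .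
  qed
  finally show ?thesis unfolding f_def L_def .
qed


lemma cube_expand: "(1 + p) * ((1 + p) * (1 + p)) = 1 + 3 * p + 3 * (p * p) + p * (p * (p::complex fps))"
proof -
  have "(1 + p) * ((1 + p) * (1 + p)) = 1 + (p + p + p) + (p * p + p * p + p * p) + p * (p * p)"
    by (simp add: algebra_simps)
  also have "p + p + p = 3 * p" by (simp add: numeral_3_eq_3 algebra_simps)
  also have "p * p + p * p + p * p = 3 * (p * p)" by (simp add: numeral_3_eq_3 algebra_simps)
  finally show ?thesis .
qed

lemma target_identity:
  fixes a :: complex
  assumes n: "n = Suc m" and a0: "a \<noteq> 0" and an: "a^2 + (of_nat n)^2 \<noteq> 0"
  defines "v \<equiv> (\<lambda>j. u j a * a^(2*j))"
  defines "p \<equiv> Abs_fps (\<lambda>j. if j \<le> m then v j else 0)"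
  shows "a^2 * ((1+p)*((1+p)*(1+p))) $ m
      - (\<Sum>i\<in>{1..m}. (of_nat ((n-i)^2) - of_nat (i*(n-i))) * (v i * v (n-i)))
      = u n a * a^(2*n) * (a^2 + (of_nat n)^2)"
proof (cases m)
  case 0
  have a1: "a^2 + 1 \<noteq> 0" using an n 0 by simp
  have "((1+p)*((1+p)*(1+p))) $ m = 1" using 0 by (simp add: p_def v_def fps_mult_nth)
  then show ?thesis using n 0 a1 by (simp add: field_simps power2_eq_square power4_eq_xxxx)
next
  case (Suc k)
  define x where "x = (\<lambda>j. u j a)"
  have x0: "x 0 = 0" by (simp add: x_def)
  have pn: "p $ j = v j" if "j \<le> m" for j using that by (simp add: p_def)
  have vx: "v j = x j * a^(2*j)" for j by (simp add: v_def x_def)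
  have P2: "(p * p) $ m = a^(2*m) * (\<Sum>(j1, j2) \<in> {(j1, j2). 1 \<le> j1 \<and> 1 \<le> j2 \<and> j1 + j2 = m}. x j1 * x j2)"
  proof -
    have "(p * p) $ m = (\<Sum>i=0..m. v i * v (m - i))"
      by (simp add: fps_mult_nth pn)
    also have "\<dots> = (\<Sum>i=0..m. a^(2*m) * (x i * x (m - i)))"
    proof (rule sum.cong[OF refl])
      fix i assume "i \<in> {0..m}"
      then have "2*i + 2*(m-i) = 2*m" by auto
      then show "v i * v (m - i) = a^(2*m) * (x i * x (m - i))"
        unfolding vx by (metis (no_types) mult.commute mult.left_commute power_add)
    qed
    finally show ?thesis unfolding pairs_sum[of x, OF x0] sum_distrib_left .
  qed
  have P3: "(p * (p * p)) $ m = a^(2*m) * (\<Sum>(j1, j2, j3) \<in> {(j1, j2, j3). 1 \<le> j1 \<and> 1 \<le> j2 \<and> 1 \<le> j3 \<and> j1 + j2 + j3 = m}.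
            x j1 * x j2 * x j3)"
  proof -
    have "(p * (p * p)) $ m = (\<Sum>i=0..m. v i * (\<Sum>j=0..m-i. v j * v (m - i - j)))"
      by (simp add: fps_mult_nth pn)
    also have "\<dots> = (\<Sum>i=0..m. a^(2*m) * (x i * (\<Sum>j=0..m-i. x j * x (m - i - j))))"
    proof (rule sum.cong[OF refl])
      fix i assume i: "i \<in> {0..m}"
      have "v i * (\<Sum>j=0..m-i. v j * v (m - i - j)) = v i * (\<Sum>j=0..m-i. a^(2*(m-i)) * (x j * x (m - i - j)))"
      proof (intro arg_cong[where f="\<lambda>t. v i * t"] sum.cong[OF refl])
        fix j assume "j \<in> {0..m-i}"
        then have "2*j + 2*(m-i-j) = 2*(m-i)" by auto
        then show "v j * v (m - i - j) = a^(2*(m-i)) * (x j * x (m - i - j))"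
          unfolding vx by (metis (no_types) mult.commute mult.left_commute power_add)
      qed
      also have "\<dots> = a^(2*i) * a^(2*(m-i)) * (x i * (\<Sum>j=0..m-i. x j * x (m - i - j)))"
        by (simp add: vx sum_distrib_left mult_ac)
      also have "a^(2*i) * a^(2*(m-i)) = a^(2*m)"
      proof -
        have "2*i + 2*(m-i) = 2*m" using i by auto
        then show ?thesis by (metis power_add)
      qed
      finally show "v i * (\<Sum>j=0..m-i. v j * v (m - i - j)) = a^(2*m) * (x i * (\<Sum>j=0..m-i. x j * x (m - i - j)))" .
    qed
    finally show ?thesis unfolding triples_sum[of x, OF x0] sum_distrib_left .
  qed
  have S: "(\<Sum>i\<in>{1..m}. (of_nat ((n-i)^2) - of_nat (i*(n-i))) * (v i * v (n-i)))
      = a^(2*n) * (\<Sum>j1 \<in> {j1. 1 \<le> j1 \<and> 2 * j1 < n}. (of_nat (n - 2 * j1))^2 * x j1 * x (n - j1))"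
  proof -
    have "(\<Sum>i\<in>{1..m}. (of_nat ((n-i)^2) - of_nat (i*(n-i))) * (v i * v (n-i)))
        = a^(2*n) * (\<Sum>i\<in>{1..m}. (of_nat ((n-i)^2) - of_nat (i*(n-i))) * (x i * x (n-i)))"
      unfolding sum_distrib_left
    proof (rule sum.cong[OF refl])
      fix i assume "i \<in> {1..m}"
      then have "2*i + 2*(n-i) = 2*n" using n by auto
      then have "v i * v (n-i) = a^(2*n) * (x i * x (n - i))"
        unfolding vx by (metis (no_types) mult.commute mult.left_commute power_add)
      then show "(of_nat ((n-i)^2) - of_nat (i*(n-i))) * (v i * v (n-i)) =
          a^(2*n) * ((of_nat ((n-i)^2) - of_nat (i*(n-i))) * (x i * x (n-i)))" by simp
    qed
    also have "(\<Sum>i\<in>{1..m}. (of_nat ((n-i)^2) - of_nat (i*(n-i))) * (x i * x (n-i)))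
        = (\<Sum>j\<in>{j. 1 \<le> j \<and> 2 * j < n}. (of_nat (n - 2 * j))^2 * (x j * x (n - j)))"
      by (rule sym_sum[OF n]) (use n in \<open>auto simp: mult.commute\<close>)
    finally show ?thesis by (simp add: mult.assoc)
  qed
  have n2: "n \<ge> 2" using n Suc by simp
  have urec: "u n a * (a^2 + (of_nat n)^2) = 3 * x m + 3 * (\<Sum>(j1, j2) \<in> {(j1, j2). 1 \<le> j1 \<and> 1 \<le> j2 \<and> j1 + j2 = m}. x j1 * x j2)
      + (\<Sum>(j1, j2, j3) \<in> {(j1, j2, j3). 1 \<le> j1 \<and> 1 \<le> j2 \<and> 1 \<le> j3 \<and> j1 + j2 + j3 = m}. x j1 * x j2 * x j3)
      - (\<Sum>j1 \<in> {j1. 1 \<le> j1 \<and> 2 * j1 < n}. (of_nat (n - 2 * j1))^2 * x j1 * x (n - j1))"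
    using u_rec[OF n2, of a] an n by (simp add: x_def)
  have C: "((1+p)*((1+p)*(1+p))) $ m = 3 * v m + 3 * (p * p) $ m + (p * (p * p)) $ m"
    unfolding cube_expand using Suc by (simp add: pn)
  have pw: "a^(2*n) = a^2 * a^(2*m)" using n by (simp add: power_add[symmetric])
  define T2 where "T2 = (\<Sum>(j1, j2) \<in> {(j1, j2). 1 \<le> j1 \<and> 1 \<le> j2 \<and> j1 + j2 = m}. x j1 * x j2)"
  define T3 where "T3 = (\<Sum>(j1, j2, j3) \<in> {(j1, j2, j3). 1 \<le> j1 \<and> 1 \<le> j2 \<and> 1 \<le> j3 \<and> j1 + j2 + j3 = m}. x j1 * x j2 * x j3)"
  define Sy where "Sy = (\<Sum>j1 \<in> {j1. 1 \<le> j1 \<and> 2 * j1 < n}. (of_nat (n - 2 * j1))^2 * x j1 * x (n - j1))"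
  note P2' = P2[folded T2_def] and P3' = P3[folded T3_def] and S' = S[folded Sy_def]
  note urec' = urec[folded T2_def T3_def Sy_def]
  have "a^2 * ((1+p)*((1+p)*(1+p))) $ m
      - (\<Sum>i\<in>{1..m}. (of_nat ((n-i)^2) - of_nat (i*(n-i))) * (v i * v (n-i)))
      = a^2 * (3 * (x m * a^(2*m)) + 3 * (a^(2*m) * T2) + a^(2*m) * T3) - a^(2*n) * Sy"
    unfolding C P2' P3' S' by (simp add: vx)
  also have "\<dots> = a^(2*n) * (3 * x m + 3 * T2 + T3 - Sy)"
    unfolding pw by (simp add: algebra_simps)
  also have "\<dots> = a^(2*n) * (u n a * (a^2 + (of_nat n)^2))"
    by (simp add: urec')
  finally show ?thesis by (simp add: mult_ac)
qed


lemma rad_sum: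
  fixes f :: "'b \<Rightarrow> complex fps"
  assumes "\<And>i. i \<in> I \<Longrightarrow> ereal r \<le> fps_conv_radius (f i)"
  shows "ereal r \<le> fps_conv_radius (\<Sum>i\<in>I. f i)"
  using assms
proof (induction I rule: infinite_finite_induct)
  case (insert i I)
  have "min (fps_conv_radius (f i)) (fps_conv_radius (\<Sum>i\<in>I. f i)) \<le> fps_conv_radius (\<Sum>i\<in>insert i I. f i)"
    using insert.hyps fps_conv_radius_add by simp
  moreover have "ereal r \<le> min (fps_conv_radius (f i)) (fps_conv_radius (\<Sum>i\<in>I. f i))"
    using insert by auto
  ultimately show ?case by order
qed auto

lemma rad_lt:
  fixes f :: "complex fps" and w :: complex
  assumes "ereal r \<le> fps_conv_radius f" "norm w < r"
  shows "ereal (norm w) < fps_conv_radius f"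
proof -
  have "ereal (norm w) < ereal r" using assms(2) by simp
  then show ?thesis using assms(1) by (rule less_le_trans)
qed

lemma eval_sum:
  fixes f :: "'b \<Rightarrow> complex fps"
  assumes "\<And>i. i \<in> I \<Longrightarrow> ereal r \<le> fps_conv_radius (f i)" and w: "norm w < r"
  shows "eval_fps (\<Sum>i\<in>I. f i) w = (\<Sum>i\<in>I. eval_fps (f i) w)"
  using assms(1)
proof (induction I rule: infinite_finite_induct)
  case (insert i I)
  have r1: "ereal (norm w) < fps_conv_radius (f i)"
    using insert.prems w by (intro rad_lt) auto
  have "ereal r \<le> fps_conv_radius (\<Sum>i\<in>I. f i)" using insert.prems by (intro rad_sum) auto
  then have r2: "ereal (norm w) < fps_conv_radius (\<Sum>i\<in>I. f i)"
    using w by (intro rad_lt)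
  show ?case using insert r1 r2 by (simp add: eval_fps_add)
qed auto

definition goodr :: "real \<Rightarrow> complex fps fps \<Rightarrow> bool" where
  "goodr r Q \<longleftrightarrow> (\<forall>j. ereal r \<le> fps_conv_radius (Q $ j))"

definition evc :: "complex \<Rightarrow> complex fps fps \<Rightarrow> complex fps" where
  "evc w Q = Abs_fps (\<lambda>j. eval_fps (Q $ j) w)"

lemma evc_nth [simp]: "evc w Q $ j = eval_fps (Q $ j) w"
  by (simp add: evc_def)


lemma good_one: "goodr r 1"
  unfolding goodr_def by (auto simp: fps_one_nth)

lemma evc_one: "evc w 1 = 1"
  by (intro fps_ext) (auto simp: fps_one_nth)

lemma good_add: "goodr r Q1 \<Longrightarrow> goodr r Q2 \<Longrightarrow> goodr r (Q1 + Q2)"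
  unfolding goodr_def
  by (metis fps_add_nth fps_conv_radius_add min.bounded_iff order_trans)

lemma evc_add: "goodr r Q1 \<Longrightarrow> goodr r Q2 \<Longrightarrow> norm w < r \<Longrightarrow> evc w (Q1 + Q2) = evc w Q1 + evc w Q2"
  unfolding goodr_def by (intro fps_ext) (simp add: eval_fps_add[OF rad_lt rad_lt, of r _ w r])

lemma good_mult: "goodr r Q1 \<Longrightarrow> goodr r Q2 \<Longrightarrow> goodr r (Q1 * Q2)"
  unfolding goodr_def fps_mult_nth
  by (intro allI rad_sum) (metis fps_conv_radius_mult min.bounded_iff order_trans)

lemma evc_mult: "goodr r Q1 \<Longrightarrow> goodr r Q2 \<Longrightarrow> norm w < r \<Longrightarrow> evc w (Q1 * Q2) = evc w Q1 * evc w Q2"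
proof (intro fps_ext)
  fix j assume g: "goodr r Q1" "goodr r Q2" and w: "norm w < r"
  have "evc w (Q1 * Q2) $ j = eval_fps (\<Sum>i=0..j. Q1 $ i * Q2 $ (j - i)) w"
    by (simp add: fps_mult_nth)
  also have "\<dots> = (\<Sum>i=0..j. eval_fps (Q1 $ i * Q2 $ (j - i)) w)"
    using g w unfolding goodr_def
    by (intro eval_sum[OF _ w]) (metis fps_conv_radius_mult min.bounded_iff order_trans)
  also have "\<dots> = (\<Sum>i=0..j. eval_fps (Q1 $ i) w * eval_fps (Q2 $ (j - i)) w)"
    using g w unfolding goodr_def by (intro sum.cong refl eval_fps_mult) (auto intro: rad_lt)
  also have "\<dots> = (evc w Q1 * evc w Q2) $ j" by (simp add: fps_mult_nth)
  finally show "evc w (Q1 * Q2) $ j = (evc w Q1 * evc w Q2) $ j" .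
qed

lemma trunc_agree:
  fixes X X' Y Y' :: "'a::comm_ring_1 fps"
  assumes "\<And>j. j \<le> m \<Longrightarrow> X $ j = X' $ j" "\<And>j. j \<le> m \<Longrightarrow> Y $ j = Y' $ j" "k \<le> m"
  shows "(X * Y) $ k = (X' * Y') $ k"
  unfolding fps_mult_nth using assms by (intro sum.cong) auto


lemma geo_inv:
  fixes c :: complex
  shows "(1 + fps_const c * fps_X) * Abs_fps (\<lambda>k. (-c)^k) = 1"
proof (rule fps_ext)
  fix k
  show "((1 + fps_const c * fps_X) * Abs_fps (\<lambda>k. (-c)^k)) $ k = (1 :: complex fps) $ k"
    by (cases k) (simp_all add: distrib_right mult.assoc)
qed

lemma geo_rad:
  fixes c :: complex
  assumes c: "c \<noteq> 0"
  shows "ereal (1 / norm c) \<le> fps_conv_radius (Abs_fps (\<lambda>k. (-c)^k))"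
  unfolding fps_conv_radius_def
proof (rule conv_radius_geI_ex')
  fix \<rho> :: real assume "0 < \<rho>" "ereal \<rho> < ereal (1 / norm c)"
  then have "\<rho> < 1 / norm c" by simp
  then have "norm c * \<rho> < 1" using c by (simp add: field_simps)
  then have "norm (-c * of_real \<rho>) < 1" using \<open>0 < \<rho>\<close> by (simp add: norm_mult)
  then have "summable (\<lambda>k. (-c * of_real \<rho>)^k)" by (rule summable_geometric)
  moreover have "(\<lambda>k. (-c * of_real \<rho>)^k) = (\<lambda>k. (-c)^k * (of_real \<rho> :: complex) ^ k)"
    by (rule ext) (simp add: power_mult_distrib[symmetric])
  ultimately have "summable (\<lambda>k. (-c)^k * (of_real \<rho> :: complex) ^ k)" by metis
  then show "summable (\<lambda>k. Abs_fps (\<lambda>k. (-c)^k) $ k * of_real \<rho> ^ k)"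
    by simp
qed

lemma cst_fps: "(of_nat k - of_nat l :: complex fps) = fps_const (of_nat k - of_nat l)"
  by (simp flip: fps_of_nat)


lemma ge_min_trans: "(r::ereal) \<le> x \<Longrightarrow> r \<le> y \<Longrightarrow> min x y \<le> z \<Longrightarrow> r \<le> z"
  by (meson min.boundedI order_trans)

lemma final_alg:
  fixes a c w ev Cv Sv U :: complex
  assumes "a \<noteq> 0" "a^2 + c \<noteq> 0" "w = 1 / a^2" "ev * (1 + c * w) = Cv - w * Sv"
    "a^2 * Cv - Sv = U * (a^2 + c)"
  shows "ev = U"
proof -
  have "ev * (a^2 + c) = a^2 * (ev * (1 + c * w))" using assms(1,3) by (simp add: field_simps)
  also have "\<dots> = a^2 * (Cv - w * Sv)" using assms(4) by simp
  also have "\<dots> = a^2 * Cv - Sv" using assms(1) unfolding assms(3) by (simp add: field_simps)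
  finally show ?thesis using assms(2,5) by simp
qed

lemma main_induct:
  fixes P :: "complex fps fps" and a :: complex
  assumes E: "fps_X * ((1 + P) * ((1 + P) * (1 + P))) - P =
         fps_const fps_X * ((1 + P) * Dop (Dop P) - Dop P * Dop P)"
    and n0: "n0 \<ge> 1" and a: "norm a > real n0"
  shows "n \<le> n0 \<Longrightarrow> ereal (1 / (real n0)^2) \<le> fps_conv_radius (P $ n)
            \<and> eval_fps (P $ n) (1 / a^2) = u n a * a^(2*n)"
proof (induction n rule: less_induct)
  case (less n)
  define r where "r = 1 / (real n0)^2"
  define w where "w = 1 / a^2"
  have n0pos: "real n0 > 0" using n0 by simp
  have a0: "a \<noteq> 0" using a n0pos by auto
  have "(real n0)^2 < (norm a)^2" using a n0pos by (intro power_strict_mono) auto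
  then have "1 / (norm a)^2 < 1 / (real n0)^2"
    using n0pos a0 by (intro divide_strict_left_mono) auto
  then have wr: "norm w < r"
    unfolding w_def r_def by (simp add: norm_divide norm_power)
  have P0: "P $ 0 = 0" using coeff0[OF E] .
  show ?case
  proof (cases n)
    case 0
    then show ?thesis by (simp add: P0)
  next
    case (Suc m)
    have IH: "ereal r \<le> fps_conv_radius (P $ j) \<and> eval_fps (P $ j) w = u j a * a^(2*j)" if "j \<le> m" for j
      using less.IH[of j] less.prems that Suc unfolding r_def w_def by auto
    define v where "v = (\<lambda>j. u j a * a^(2*j))"
    define P' where "P' = Abs_fps (\<lambda>j. if j \<le> m then P $ j else 0)"
    define p where "p = Abs_fps (\<lambda>j. if j \<le> m then v j else 0)"
    have gP': "goodr r P'" unfolding goodr_def P'_def using IH by auto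
    have eP': "evc w P' = p" unfolding p_def P'_def v_def
      by (intro fps_ext) (simp add: IH)
    have g1: "goodr r (1 + P')" by (intro good_add good_one gP')
    have e1: "evc w (1 + P') = 1 + p" using evc_add[OF good_one gP' wr] by (simp add: evc_one eP')
    define Q where "Q = (1 + P') * ((1 + P') * (1 + P'))"
    have gQ: "goodr r Q" unfolding Q_def by (intro good_mult g1)
    have eQ: "evc w Q = (1 + p) * ((1 + p) * (1 + p))"
      unfolding Q_def using g1 wr by (simp add: evc_mult good_mult e1)
    have ag1: "(1 + P) $ j = (1 + P') $ j" if "j \<le> m" for j using that by (simp add: P'_def)
    have ag2: "((1 + P) * (1 + P)) $ j = ((1 + P') * (1 + P')) $ j" if "j \<le> m" for j
      using that by (intro trunc_agree[of m] ag1)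
    have QC: "((1 + P) * ((1 + P) * (1 + P))) $ m = Q $ m"
      unfolding Q_def by (intro trunc_agree[of m] ag1 ag2) auto
    define S where "S = (\<Sum>i\<in>{1..m}. (of_nat ((n-i)^2) - of_nat (i*(n-i))) * (P $ i * P $ (n-i)) :: complex fps)"
    have idx: "i \<le> m" "n - i \<le> m" if "i \<in> {1..m}" for i using that Suc by auto
    have rterm: "ereal r \<le> fps_conv_radius ((of_nat ((n-i)^2) - of_nat (i*(n-i))) * (P $ i * P $ (n-i)) :: complex fps)"
      if "i \<in> {1..m}" for i
    proof -
      have "ereal r \<le> min (fps_conv_radius (P $ i)) (fps_conv_radius (P $ (n-i)))"
        using IH[OF idx(1)[OF that]] IH[OF idx(2)[OF that]] by simp
      also have "\<dots> \<le> fps_conv_radius (P $ i * P $ (n-i))" by (rule fps_conv_radius_mult)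
      also have "\<dots> = min (fps_conv_radius (fps_const (of_nat ((n-i)^2) - of_nat (i*(n-i)) :: complex))) (fps_conv_radius (P $ i * P $ (n-i)))"
        by simp
      also have "\<dots> \<le> fps_conv_radius ((of_nat ((n-i)^2) - of_nat (i*(n-i))) * (P $ i * P $ (n-i)) :: complex fps)"
        unfolding cst_fps by (rule fps_conv_radius_mult)
      finally show ?thesis .
    qed
    have rS: "ereal r \<le> fps_conv_radius S" unfolding S_def by (intro rad_sum rterm)
    have eS: "eval_fps S w = (\<Sum>i\<in>{1..m}. (of_nat ((n-i)^2) - of_nat (i*(n-i))) * (v i * v (n-i)))"
      unfolding S_def
    proof (subst eval_sum[OF rterm wr], assumption, intro sum.cong refl)
      fix i assume i: "i \<in> {1..m}"
      have r1: "ereal (norm w) < fps_conv_radius (P $ i)" using IH[OF idx(1)[OF i]] wr by (intro rad_lt) auto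
      have r2: "ereal (norm w) < fps_conv_radius (P $ (n-i))" using IH[OF idx(2)[OF i]] wr by (intro rad_lt) auto
      have r3: "ereal (norm w) < fps_conv_radius (P $ i * P $ (n-i))"
      proof -
        have "ereal (norm w) < min (fps_conv_radius (P $ i)) (fps_conv_radius (P $ (n-i)))"
          using r1 r2 by simp
        then show ?thesis using fps_conv_radius_mult[of "P $ i" "P $ (n-i)"] by (rule less_le_trans)
      qed
      show "eval_fps ((of_nat ((n-i)^2) - of_nat (i*(n-i))) * (P $ i * P $ (n-i))) w =
            (of_nat ((n-i)^2) - of_nat (i*(n-i))) * (v i * v (n-i))"
        unfolding cst_fps
        using r1 r2 r3 IH[OF idx(1)[OF i]] IH[OF idx(2)[OF i]]
        by (simp add: eval_fps_mult v_def)
    qed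
    define H where "H = Q $ m - fps_X * S"
    have rQ: "ereal r \<le> fps_conv_radius (Q $ m)" using gQ unfolding goodr_def by auto
    have rXS: "ereal r \<le> fps_conv_radius (fps_X * S)"
      using rS fps_conv_radius_mult[of fps_X S] by simp
    have rH: "ereal r \<le> fps_conv_radius H"
      unfolding H_def using rQ rXS fps_conv_radius_diff[of "Q $ m" "fps_X * S"] by (rule ge_min_trans)
    have eQm: "eval_fps (Q $ m) w = ((1 + p) * ((1 + p) * (1 + p))) $ m"
      using arg_cong[OF eQ, of "\<lambda>f. f $ m"] by simp
    have eH: "eval_fps H w = ((1 + p) * ((1 + p) * (1 + p))) $ m - w * eval_fps S w"
      unfolding H_def using rQ rXS rS wr
      by (simp add: eval_fps_diff rad_lt eval_fps_mult eQm)
    define c where "c = (of_nat (n^2) :: complex)"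
    define K where "K = 1 + fps_const c * fps_X"
    have eqn: "P $ n * K = H"
      using coeffn[OF E Suc] QC unfolding K_def H_def S_def c_def by (simp flip: fps_of_nat)
    define Eg where "Eg = Abs_fps (\<lambda>k. (-c)^k)"
    have KE: "K * Eg = 1" unfolding K_def Eg_def by (rule geo_inv)
    have c0: "c \<noteq> 0"
    proof -
      have "n^2 \<noteq> 0" using Suc by simp
      then show ?thesis unfolding c_def by (metis of_nat_eq_0_iff)
    qed
    have rEg: "ereal r \<le> fps_conv_radius Eg"
    proof -
      have "real n \<le> real n0" using less.prems by simp
      then have "(real n)^2 \<le> (real n0)^2" by (intro power_mono) auto
      moreover have nc: "norm c = (real n)^2" unfolding c_def by (simp add: norm_power)
      moreover have "real n > 0" using Suc by simp
      ultimately have "r \<le> 1 / norm c" unfolding r_def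
        by (intro divide_left_mono) auto
      then have "ereal r \<le> ereal (1 / norm c)" by simp
      then show ?thesis using geo_rad[OF c0] unfolding Eg_def by (rule order_trans)
    qed
    have PnH: "P $ n = H * Eg"
    proof -
      have "P $ n = P $ n * (K * Eg)" by (simp add: KE)
      also have "\<dots> = H * Eg" by (simp add: eqn mult.assoc[symmetric])
      finally show ?thesis .
    qed
    have rPn: "ereal r \<le> fps_conv_radius (P $ n)"
      unfolding PnH using rH rEg fps_conv_radius_mult[of H Eg] by (rule ge_min_trans)
    have rK: "fps_conv_radius K = (\<infinity>::ereal)"
    proof -
      have "(\<infinity>::ereal) \<le> min (fps_conv_radius (1::complex fps)) (fps_conv_radius (fps_const c * fps_X))"
        using c0 by (simp add: fps_conv_radius_cmult_left)
      also have "\<dots> \<le> fps_conv_radius K" unfolding K_def by (rule fps_conv_radius_add)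
      finally show ?thesis by simp
    qed
    have eK: "eval_fps K w = 1 + c * w"
    proof -
      have "eval_fps K w = eval_fps 1 w + eval_fps (fps_const c * fps_X) w"
        unfolding K_def by (rule eval_fps_add) (simp_all add: c0 fps_conv_radius_cmult_left)
      also have "eval_fps (fps_const c * fps_X) w = c * w"
        by (subst eval_fps_mult) simp_all
      finally show ?thesis by simp
    qed
    have evn: "eval_fps (P $ n) w * (1 + c * w) = eval_fps H w"
      using arg_cong[OF eqn, of "\<lambda>f. eval_fps f w"] rPn wr rK eK
      by (simp add: eval_fps_mult rad_lt)
    have an: "a^2 + (of_nat n)^2 \<noteq> 0"
    proof
      assume h: "a^2 + (of_nat n)^2 = 0"
      then have "norm (a^2) = norm ((of_nat n)^2 :: complex)" by (simp add: eq_neg_iff_add_eq_0[symmetric])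
      then have "(norm a)^2 = (real n)^2" by (simp add: norm_power)
      moreover have "real n < norm a" using a less.prems by simp
      then have "(real n)^2 < (norm a)^2" by (intro power_strict_mono) auto
      ultimately show False by simp
    qed
    have T: "a^2 * ((1+p)*((1+p)*(1+p))) $ m
      - (\<Sum>i\<in>{1..m}. (of_nat ((n-i)^2) - of_nat (i*(n-i))) * (v i * v (n-i)))
      = u n a * a^(2*n) * (a^2 + (of_nat n)^2)"
      unfolding p_def v_def by (rule target_identity[OF Suc a0 an])
    have cc: "c = (of_nat n)^2" unfolding c_def by simp
    have key: "eval_fps (P $ n) w * (1 + c * w) = ((1+p)*((1+p)*(1+p))) $ m
        - w * (\<Sum>i\<in>{1..m}. (of_nat ((n-i)^2) - of_nat (i*(n-i))) * (v i * v (n-i)))"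
      using evn eH eS by simp
    have "eval_fps (P $ n) w = u n a * a^(2*n)"
      by (rule final_alg[OF a0 an[folded cc] w_def key T[folded cc]])
    then show ?thesis using rPn unfolding r_def w_def by simp
  qed
qed


theorem corollary1:
  fixes A :: "nat \<Rightarrow> complex \<Rightarrow> complex" and n :: nat and a :: complex
  assumes holo: "\<And>k. A k holomorphic_on ball 0 (4/27)"
    and A0_zero: "A 0 0 = 0"
    and formal: "\<And>z. z \<in> ball 0 (4/27) \<Longrightarrow> formal_solution A z"
    and n: "n \<ge> 1"
    and a: "norm a > real n"
  shows "summable (\<lambda>k. norm ((-1)^k * Acoef A k n / a^(2*k)))
       \<and> (\<Sum>k. (-1)^k * Acoef A k n / a^(2*k)) = u n a * a^(2*n)"
proof -
  define P where "P = Tr (\<lambda>k. fps_expansion (A k) 0)"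
  have E: "fps_X * ((1 + P) * ((1 + P) * (1 + P))) - P =
         fps_const fps_X * ((1 + P) * Dop (Dop P) - Dop P * Dop P)"
    using bivariate_eq[OF holo formal] unfolding P_def .
  have M: "ereal (1 / (real n)^2) \<le> fps_conv_radius (P $ n)
            \<and> eval_fps (P $ n) (1 / a^2) = u n a * a^(2*n)"
    using main_induct[OF E n a, of n] by simp
  define w where "w = 1 / a^2"
  have npos: "real n > 0" using n by simp
  have a0: "a \<noteq> 0" using a npos by auto
  have "(real n)^2 < (norm a)^2" using a npos by (intro power_strict_mono) auto
  then have "1 / (norm a)^2 < 1 / (real n)^2"
    using npos a0 by (intro divide_strict_left_mono) auto
  then have wr: "norm w < 1 / (real n)^2"
    unfolding w_def by (simp add: norm_divide norm_power)
  have wrad: "ereal (norm w) < fps_conv_radius (P $ n)"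
    using M wr by (intro rad_lt[of "1 / (real n)^2"]) auto
  have trm: "(-1)^k * Acoef A k n / a^(2*k) = P $ n $ k * w ^ k" for k
  proof -
    have pk: "P $ n $ k = (deriv ^^ n) (A k) 0 / fact n"
      unfolding P_def by (simp add: fps_expansion_def)
    have m1: "((-1::complex)^k) * (-1)^k = 1"
      by (simp add: power_mult_distrib[symmetric])
    have wk: "w ^ k = 1 / a^(2*k)"
      unfolding w_def by (simp add: power_mult power_one_over)
    have "(-1)^k * Acoef A k n / a^(2*k) = ((-1)^k * (-1)^k) * ((deriv ^^ n) (A k) 0 / fact n) / a^(2*k)"
      unfolding Acoef_def by (simp add: mult.assoc)
    also have "\<dots> = P $ n $ k * w ^ k" unfolding m1 pk[symmetric] wk by simp
    finally show ?thesis .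
  qed
  have "summable (\<lambda>k. norm (P $ n $ k * w ^ k))"
    using norm_summable_fps[OF wrad] .
  moreover have "(\<lambda>k. P $ n $ k * w ^ k) sums eval_fps (P $ n) w"
    using sums_eval_fps[OF wrad] .
  ultimately show ?thesis
    using M unfolding trm w_def by (simp add: sums_iff)
qed

end
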